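(* Let $T$ be a tree of order $n$ with $\mathrm{diss}(T)=\frac{2n}{3}$. Then for every vertex $u$ of $T$, there is a maximum dissociation set of $T$ (i.e., a dissociation set of cardinality $\mathrm{diss}(T)$) not containing $u$.
   Context: A set $D$ of vertices of a graph $G$ is a dissociation set if the induced subgraph $G[D]$ has maximum degree at most $1$; $\mathrm{diss}(G)$ is the maximum cardinality of a dissociation set of $G$. *)

theory Defs
  imports Main
begin

definition simple_graph :: "'a set \<Rightarrow> 'a set set \<Rightarrow> bool" where
  "simple_graph V E \<longleftrightarrow> finite V \<and> (\<forall>e\<in>E. e \<subseteq> V \<and> card e = 2)"

fun is_walk :: "'a set set \<Rightarrow> 'a list \<Rightarrow> bool" where
  "is_walk E [] = False"
| "is_walk E [x] = True"
| "is_walk E (x # y # xs) = ({x, y} \<in> E \<and> is_walk E (y # xs))"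

definition connected_graph :: "'a set \<Rightarrow> 'a set set \<Rightarrow> bool" where
  "connected_graph V E \<longleftrightarrow> V \<noteq> {} \<and>
     (\<forall>u\<in>V. \<forall>v\<in>V. \<exists>p. is_walk E p \<and> set p \<subseteq> V \<and> hd p = u \<and> last p = v)"

definition has_cycle :: "'a set set \<Rightarrow> bool" where
  "has_cycle E \<longleftrightarrow> (\<exists>p. is_walk E p \<and> length p \<ge> 3 \<and> distinct p \<and> {last p, hd p} \<in> E)"

definition is_tree :: "'a set \<Rightarrow> 'a set set \<Rightarrow> bool" where
  "is_tree V E \<longleftrightarrow> simple_graph V E \<and> connected_graph V E \<and> \<not> has_cycle E"

definition dissociation_set :: "'a set \<Rightarrow> 'a set set \<Rightarrow> 'a set \<Rightarrow> bool" where
  "dissociation_set V E D \<longleftrightarrow> D \<subseteq> V \<and>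
     (\<forall>v\<in>D. card {w\<in>D. {v, w} \<in> E} \<le> 1)"

definition diss :: "'a set \<Rightarrow> 'a set set \<Rightarrow> nat" where
  "diss V E = Max (card ` {D. dissociation_set V E D})"

end

theory Submission imports Defs begin

lemma walk_nth: "is_walk E p \<longleftrightarrow> p \<noteq> [] \<and> (\<forall>i. Suc i < length p \<longrightarrow> {p!i, p!Suc i} \<in> E)"
proof (induction E p rule: is_walk.induct)
  case (3 E x y xs)
  show ?case
  proof
    assume "is_walk E (x # y # xs)"
    then show "x # y # xs \<noteq> [] \<and> (\<forall>i. Suc i < length (x # y # xs) \<longrightarrow> {(x # y # xs) ! i, (x # y # xs) ! Suc i} \<in> E)"
      using 3 by (auto simp: nth_Cons split: nat.splits)
  next
    assume h: "x # y # xs \<noteq> [] \<and> (\<forall>i. Suc i < length (x # y # xs) \<longrightarrow> {(x # y # xs) ! i, (x # y # xs) ! Suc i} \<in> E)"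
    have "{x,y} \<in> E" using h[THEN conjunct2, rule_format, of 0] by simp
    moreover have "\<forall>i. Suc i < length (y # xs) \<longrightarrow> {(y # xs) ! i, (y # xs) ! Suc i} \<in> E"
      using h[THEN conjunct2, rule_format, of "Suc _"] by simp
    ultimately show "is_walk E (x # y # xs)" using 3 by simp
  qed
qed auto

lemma cycA:
  assumes "is_walk E p" "distinct p" "i + 2 \<le> j" "j < length p" "{p!j, p!i} \<in> E"
  shows "has_cycle E"
proof -
  define q where "q = drop i (take (Suc j) p)"
  have len: "length q = Suc j - i" using assms by (simp add: q_def)
  have nth: "\<And>k. k < length q \<Longrightarrow> q ! k = p ! (i + k)" using assms by (simp add: q_def)
  have "is_walk E q"
    unfolding walk_nth
  proof
    show "q \<noteq> []" using len assms by auto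
    show "\<forall>k. Suc k < length q \<longrightarrow> {q ! k, q ! Suc k} \<in> E"
      using assms(1) len nth assms(4) unfolding walk_nth by auto
  qed
  moreover have "distinct q" using assms(2) by (simp add: q_def)
  moreover have "hd q = p ! i" using nth[of 0] len assms by (subst hd_conv_nth) auto
  moreover have "last q = p ! j"
  proof -
    have "q \<noteq> []" using len assms by auto
    then have "last q = q ! (length q - 1)" by (rule last_conv_nth)
    also have "\<dots> = p ! j" using nth[of "j - i"] len assms by (simp add: Suc_diff_le)
    finally show ?thesis .
  qed
  ultimately show ?thesis unfolding has_cycle_def using len assms by (intro exI[of _ q]) auto
qed

lemma cycB:
  assumes "is_walk E p" "distinct p" "i < j" "j < length p" "w \<notin> set p"
    "{p!i, w} \<in> E" "{p!j, w} \<in> E"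
  shows "has_cycle E"
proof -
  define q0 where "q0 = drop i (take (Suc j) p)"
  define q where "q = q0 @ [w]"
  have len0: "length q0 = Suc j - i" using assms by (simp add: q0_def)
  have nth0: "\<And>k. k < length q0 \<Longrightarrow> q0 ! k = p ! (i + k)" using assms by (simp add: q0_def)
  have len: "length q = Suc (Suc j - i)" by (simp add: q_def len0)
  have "is_walk E q"
    unfolding walk_nth
  proof
    show "q \<noteq> []" by (simp add: q_def)
    show "\<forall>k. Suc k < length q \<longrightarrow> {q ! k, q ! Suc k} \<in> E"
    proof (intro allI impI)
      fix k assume k: "Suc k < length q"
      show "{q ! k, q ! Suc k} \<in> E"
      proof (cases "Suc k < length q0")
        case True
        then show ?thesis using assms(1) nth0 len0 assms(4) unfolding walk_nth q_def
          by (auto simp: nth_append)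
      next
        case False
        then have "k = j - i" using k len len0 by auto
        then show ?thesis using nth0[of k] len0 assms unfolding q_def
          by (auto simp: nth_append)
      qed
    qed
  qed
  moreover have "distinct q" using assms(2,5)
    by (fastforce simp: q_def q0_def dest: in_set_dropD in_set_takeD)
  moreover have "hd q = p ! i" using nth0[of 0] len0 assms by (simp add: q_def hd_append) (subst hd_conv_nth, auto)
  moreover have "last q = w" by (simp add: q_def)
  ultimately show ?thesis unfolding has_cycle_def using len assms
    by (intro exI[of _ q]) (auto simp: insert_commute)
qed

lemma walk_mono: "is_walk E' p \<Longrightarrow> E' \<subseteq> E \<Longrightarrow> is_walk E p"
  by (induction E' p rule: is_walk.induct) auto

lemma cycle_mono: "has_cycle E' \<Longrightarrow> E' \<subseteq> E \<Longrightarrow> has_cycle E"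
  unfolding has_cycle_def using walk_mono by blast

lemma extend:
  assumes sg: "simple_graph V E"
    and d: "dissociation_set (V - R) {e\<in>E. e \<subseteq> V - R} D'"
    and AR: "A \<subseteq> R" and RV: "R \<subseteq> V"
    and A1: "\<forall>x\<in>A. card {w\<in>A. {x,w}\<in>E} \<le> 1"
    and A2: "\<forall>x\<in>A. \<forall>w. {x,w}\<in>E \<longrightarrow> w \<in> R"
  shows "dissociation_set V E (D' \<union> A) \<and> card (D' \<union> A) = card D' + card A"
proof -
  have fV: "finite V" using sg by (simp add: simple_graph_def)
  have D'sub: "D' \<subseteq> V - R" using d by (simp add: dissociation_set_def)
  have A2': "\<forall>x\<in>A. \<forall>w. {w,x}\<in>E \<longrightarrow> w \<in> R" using A2 by (metis insert_commute)
  have "\<forall>v\<in>D' \<union> A. card {w\<in>D' \<union> A. {v,w}\<in>E} \<le> 1"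
  proof
    fix v assume v: "v \<in> D' \<union> A"
    show "card {w\<in>D' \<union> A. {v,w}\<in>E} \<le> 1"
    proof (cases "v \<in> D'")
      case True
      have "{w\<in>D' \<union> A. {v,w}\<in>E} = {w\<in>D'. {v,w} \<in> {e\<in>E. e \<subseteq> V - R}}"
        using A2' True D'sub by blast
      then show ?thesis using d True by (simp add: dissociation_set_def)
    next
      case False
      then have vA: "v \<in> A" using v by auto
      have "{w\<in>D' \<union> A. {v,w}\<in>E} = {w\<in>A. {v,w}\<in>E}"
        using A2 vA D'sub by auto
      then show ?thesis using A1 vA by simp
    qed
  qed
  moreover have "D' \<union> A \<subseteq> V" using D'sub AR RV by auto
  moreover have "card (D' \<union> A) = card D' + card A"
    using D'sub AR RV fV by (intro card_Un_disjoint) (auto intro: finite_subset)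
  ultimately show ?thesis by (simp add: dissociation_set_def)
qed

lemma edge_props: "simple_graph V E \<Longrightarrow> {x,y} \<in> E \<Longrightarrow> x \<in> V \<and> y \<in> V \<and> x \<noteq> y"
  unfolding simple_graph_def by (cases "x = y") force+

lemma forest_diss:
  "finite V \<Longrightarrow> simple_graph V E \<Longrightarrow> \<not> has_cycle E \<Longrightarrow>
    \<exists>D. dissociation_set V E D \<and> 2 * card V \<le> 3 * card D"
proof (induction "card V" arbitrary: V E rule: less_induct)
  case less
  note fV = less.prems(1) and sg = less.prems(2) and nc = less.prems(3)
  have reduce: "\<exists>D. dissociation_set V E D \<and> 2 * card V \<le> 3 * card D"
    if RV: "R \<subseteq> V" and Rne: "R \<noteq> {}" and AR: "A \<subseteq> R"
      and A1: "\<forall>x\<in>A. card {w\<in>A. {x,w}\<in>E} \<le> 1"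
      and A2: "\<forall>x\<in>A. \<forall>w. {x,w}\<in>E \<longrightarrow> w \<in> R"
      and cnt: "2 * card R \<le> 3 * card A" for R A
  proof -
    define E' where "E' = {e\<in>E. e \<subseteq> V - R}"
    have "V - R \<subset> V" using RV Rne by auto
    then have "card (V - R) < card V" by (rule psubset_card_mono[OF fV])
    moreover have "simple_graph (V - R) E'" using sg by (auto simp: simple_graph_def E'_def)
    moreover have "\<not> has_cycle E'" using nc cycle_mono[of E' E] by (auto simp: E'_def)
    ultimately obtain D' where D': "dissociation_set (V - R) E' D'" "2 * card (V - R) \<le> 3 * card D'"
      using less.hyps[of "V - R" E'] fV by auto
    have ext: "dissociation_set V E (D' \<union> A) \<and> card (D' \<union> A) = card D' + card A"
      using extend[OF sg _ AR RV A1 A2] D'(1) by (simp add: E'_def)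
    have "card V = card (V - R) + card R"
      using card_Diff_subset[OF finite_subset[OF RV fV] RV] card_mono[OF fV RV] by simp
    then show ?thesis using ext D'(2) cnt by (intro exI[of _ "D' \<union> A"]) auto
  qed
  show ?case
  proof (cases "E = {}")
    case True
    have "dissociation_set V E V" using True by (simp add: dissociation_set_def)
    then show ?thesis by auto
  next
    case False
    then obtain e where "e \<in> E" by auto
    then obtain a b where ab: "{a,b} \<in> E" using sg unfolding simple_graph_def
      by (metis card_2_iff)
    define S where "S = {p. is_walk E p \<and> distinct p \<and> set p \<subseteq> V}"
    have "S \<subseteq> {p. set p \<subseteq> V \<and> length p \<le> card V}"
      using fV by (auto simp: S_def distinct_card[symmetric] intro: card_mono)
    then have fS: "finite S" using finite_lists_length_le[OF fV] finite_subset by blast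
    have abS: "[a,b] \<in> S" using ab edge_props[OF sg ab] by (simp add: S_def)
    obtain p where pS: "p \<in> S" and pmax: "\<forall>q\<in>S. length q \<le> length p"
    proof -
      have "Max (length ` S) \<in> length ` S" using fS abS by (intro Max_in) auto
      then obtain p where "p \<in> S" "length p = Max (length ` S)" by auto
      moreover have "\<forall>q\<in>S. length q \<le> Max (length ` S)" using fS by auto
      ultimately show ?thesis using that by auto
    qed
    have pw: "is_walk E p" and pd: "distinct p" and pV: "set p \<subseteq> V" using pS by (auto simp: S_def)
    have "length p \<ge> 2" using pmax abS by force
    then obtain x0 x1 rest where p: "p = x0 # x1 # rest"
      by (metis Suc_le_length_iff numeral_2_eq_2)
    have e01: "{x0,x1} \<in> E" using pw p by simp
    have p0: "p ! 0 = x0" and p1: "p ! 1 = x1" using p by simp_all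
    define L where "L = {w. {x1,w}\<in>E \<and> (\<forall>z. {w,z}\<in>E \<longrightarrow> z = x1)}"
    define N where "N = {w. {x1,w}\<in>E}"
    have x0L: "x0 \<in> L"
    proof -
      have "{x1,x0}\<in>E" using e01 by (simp add: insert_commute)
      moreover have "z = x1" if z: "{x0,z}\<in>E" for z
      proof (rule ccontr)
        assume zx1: "z \<noteq> x1"
        have zx0: "z \<noteq> x0" and zV: "z \<in> V" using edge_props[OF sg z] by auto
        show False
        proof (cases "z \<in> set p")
          case True
          then obtain j where j: "j < length p" "p ! j = z" by (metis in_set_conv_nth)
          have "j \<noteq> 0" using j zx0 p0 by (cases "j = 0") auto
          moreover have "j \<noteq> 1" using j zx1 p1 by (cases "j = 1") auto
          ultimately have "0 + 2 \<le> j" by simp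
          then have "has_cycle E" using cycA[OF pw pd _ j(1)] j z p by (simp add: insert_commute)
          then show False using nc by simp
        next
          case False
          have "z # p \<in> S" using False zV pS pw p z by (simp add: S_def insert_commute)
          then show False using pmax by fastforce
        qed
      qed
      ultimately show ?thesis by (simp add: L_def)
    qed
    have NL: "w = p ! 2" if wN: "w \<in> N" and wL: "w \<notin> L" for w
    proof -
      have e1w: "{x1,w}\<in>E" using wN by (simp add: N_def)
      have wx1: "w \<noteq> x1" and wV: "w \<in> V" using edge_props[OF sg e1w] by auto
      have wx0: "w \<noteq> x0" using wL x0L by auto
      show ?thesis
      proof (cases "w \<in> set p")
        case True
        then obtain j where j: "j < length p" "p ! j = w" by (metis in_set_conv_nth)
        have j0a: "j \<noteq> 0" using j wx0 p0 by (cases "j = 0") auto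
        have j0b: "j \<noteq> 1" using j wx1 p1 by (cases "j = 1") auto
        note j0 = j0a j0b
        show ?thesis
        proof (rule ccontr)
          assume "w \<noteq> p ! 2"
          then have "j \<noteq> 2" using j by auto
          then have "1 + 2 \<le> j" using j0 by simp
          then have "has_cycle E" using cycA[OF pw pd _ j(1), of 1] j e1w p by (simp add: insert_commute)
          then show False using nc by simp
        qed
      next
        case False
        from wL e1w obtain z where z: "{w,z}\<in>E" "z \<noteq> x1" by (auto simp: L_def)
        have zw: "z \<noteq> w" and zV: "z \<in> V" using edge_props[OF sg z(1)] by auto
        show ?thesis
        proof (cases "z \<in> set p")
          case True
          then obtain j where j: "j < length p" "p ! j = z" by (metis in_set_conv_nth)
          have "has_cycle E"
          proof (cases "j = 0")
            case True
            show ?thesis using cycB[OF pw pd, of 0 1 w] p j True z(1) e1w False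
              by (simp add: insert_commute)
          next
            case j0: False
            have "j \<noteq> 1" using j z(2) p1 by (cases "j = 1") auto
            then have "1 < j" using j0 by simp
            show ?thesis using cycB[OF pw pd \<open>1<j\<close> j(1) False] p j z(1) e1w
              by (simp add: insert_commute)
          qed
          then show ?thesis using nc by simp
        next
          case zn: False
          have "z # w # tl p \<in> S" using zn False zw pS pw p z(1) e1w zV wV
            by (simp add: S_def insert_commute)
          then have "length (z # w # tl p) \<le> length p" using pmax by blast
          then show ?thesis using p by simp
        qed
      qed
    qed
    have NV: "N \<subseteq> V" using edge_props[OF sg] by (auto simp: N_def)
    have LN: "L \<subseteq> N" by (auto simp: L_def N_def)
    have x1V: "x1 \<in> V" using pV p by auto
    have fL: "finite L" using finite_subset[OF subset_trans[OF LN NV] fV] .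
    have x1L: "x1 \<notin> L" using edge_props[OF sg, of x1 x1] by (auto simp: L_def)
    show ?thesis
    proof (cases "card L \<ge> 2")
      case True
      show ?thesis
      proof (rule reduce[of "insert x1 L" L])
        show "insert x1 L \<subseteq> V" using x1V LN NV by auto
        show "\<forall>x\<in>L. card {w\<in>L. {x,w}\<in>E} \<le> 1"
        proof
          fix x assume "x \<in> L"
          then have h: "{w\<in>L. {x,w}\<in>E} = {}" using x1L by (auto simp: L_def)
          show "card {w\<in>L. {x,w}\<in>E} \<le> 1" unfolding h by simp
        qed
        show "\<forall>x\<in>L. \<forall>w. {x,w}\<in>E \<longrightarrow> w \<in> insert x1 L" by (auto simp: L_def)
        show "2 * card (insert x1 L) \<le> 3 * card L" using True x1L fL by simp
      qed auto
    next
      case False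
      then have "card L \<le> Suc 0" by simp
      then have "\<forall>a\<in>L. \<forall>b\<in>L. a = b" using card_le_Suc0_iff_eq[OF fL] by blast
      then have L: "L = {x0}" using x0L by blast
      have N: "N \<subseteq> {x0, p ! 2}" using NL L by auto
      have x01: "x0 \<noteq> x1" using edge_props[OF sg e01] by simp
      have x0N: "x0 \<in> N" using LN L by auto
      show ?thesis
      proof (rule reduce[of "insert x1 N" "{x0,x1}"])
        show "insert x1 N \<subseteq> V" using x1V NV by auto
        show "{x0,x1} \<subseteq> insert x1 N" using x0N by auto
        show "\<forall>x\<in>{x0,x1}. card {w\<in>{x0,x1}. {x,w}\<in>E} \<le> 1"
        proof
          fix x assume x: "x \<in> {x0,x1}"
          have "{w\<in>{x0,x1}. {x,w}\<in>E} \<subseteq> {x0,x1} - {x}" using edge_props[OF sg] by auto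
          moreover have "card ({x0,x1} - {x}) = 1" using x x01 by auto
          ultimately show "card {w\<in>{x0,x1}. {x,w}\<in>E} \<le> 1" by (metis card_mono finite.emptyI finite_Diff finite_insert)
        qed
        show "\<forall>x\<in>{x0,x1}. \<forall>w. {x,w}\<in>E \<longrightarrow> w \<in> insert x1 N"
          using x0L by (auto simp: L_def N_def)
        have "card (insert x1 N) \<le> 3"
        proof -
          have "card (insert x1 N) \<le> card {x1, x0, p ! 2}" using N by (intro card_mono) auto
          also have "\<dots> \<le> 3" by (simp add: card_insert_le_m1)
          finally show ?thesis .
        qed
        then show "2 * card (insert x1 N) \<le> 3 * card {x0,x1}" using x01 by simp
      qed auto
    qed
  qed
qed

theorem lemma2:
  fixes V :: "'a set" and E :: "'a set set" and n :: nat
  assumes "is_tree V E"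
    and "card V = n"
    and "3 * diss V E = 2 * n"
    and "u \<in> V"
  shows "\<exists>D. dissociation_set V E D \<and> card D = diss V E \<and> u \<notin> D"
proof -
  have sg: "simple_graph V E" and nc: "\<not> has_cycle E" using assms(1) by (auto simp: is_tree_def)
  have fV: "finite V" using sg by (simp add: simple_graph_def)
  define E' where "E' = {e\<in>E. e \<subseteq> V - {u}}"
  have "simple_graph (V - {u}) E'" using sg by (auto simp: simple_graph_def E'_def)
  moreover have "\<not> has_cycle E'" using nc cycle_mono[of E' E] by (auto simp: E'_def)
  ultimately obtain D where D: "dissociation_set (V - {u}) E' D" "2 * card (V - {u}) \<le> 3 * card D"
    using forest_diss[of "V - {u}" E'] fV by auto
  have "dissociation_set V E (D \<union> {}) \<and> card (D \<union> {}) = card D + card ({}::'a set)"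
    by (rule extend[OF sg, of "{u}"]) (use D(1) assms(4) in \<open>auto simp: E'_def\<close>)
  then have dV: "dissociation_set V E D" by simp
  have uD: "u \<notin> D" using D(1) by (auto simp: dissociation_set_def)
  have fin: "finite (card ` {D. dissociation_set V E D})"
  proof (rule finite_imageI, rule finite_subset[of _ "Pow V"])
    show "{D. dissociation_set V E D} \<subseteq> Pow V" by (auto simp: dissociation_set_def)
  qed (use fV in simp)
  have le: "card D \<le> diss V E" unfolding diss_def using fin dV by (intro Max_ge) auto
  have "card (V - {u}) = n - 1" using assms(2,4) fV by simp
  moreover have "n \<ge> 1" using assms(2,4) fV using card_gt_0_iff[of V] by auto
  ultimately have "card D = diss V E" using D(2) le assms(3) by linarith
  then show ?thesis using dV uD by blast
qed

end
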